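(* Let $\mathcal C$ be a class of colorings that has the refinement property. Then for every hypergraph $H$ with $n\ge1$ vertices, $\mathrm{ch}_{\mathcal C}(H)\le\chi_{\mathcal C}(H)\cdot\ln n+1$.
   Context: A class of colorings $\mathcal C$ specifies, for each hypergraph $H=(V,\mathcal E)$, a set of colorings $V\to\mathbb Z_{>0}$ called $\mathcal C$-colorings of $H$. A coloring $C'$ is a refinement of a coloring $C$ if $C(x)\ne C(y)$ implies $C'(x)\ne C'(y)$. $\mathcal C$ has the refinement property if every refinement of a $\mathcal C$-coloring of $H$ is also a $\mathcal C$-coloring of $H$. $\chi_{\mathcal C}(H)$ is the minimum number of colors used by a $\mathcal C$-coloring of $H$ (assumed to exist). $\mathrm{ch}_{\mathcal C}(H)$ is the minimum $k$ such that for every family $\{L_v\}_{v\in V}$ of sets of positive integers with $|L_v|\ge k$, there is a $\mathcal C$-coloring $C$ of $H$ with $C(v)\in L_v$ for all $v$. *)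

theory Defs
  imports Complex_Main
begin

text \<open>A class of colorings is modelled as a predicate Cls V E c saying that c is a member of the
class for the hypergraph (V, E); only the values of c on V matter.\<close>

definition hypergraph :: "'a set \<Rightarrow> 'a set set \<Rightarrow> bool" where
  "hypergraph V E \<longleftrightarrow> E \<subseteq> Pow V"

definition is_coloring :: "'a set \<Rightarrow> ('a \<Rightarrow> nat) \<Rightarrow> bool" where
  "is_coloring V c \<longleftrightarrow> (\<forall>v\<in>V. 0 < c v)"

definition class_coloring ::
  "('a set \<Rightarrow> 'a set set \<Rightarrow> ('a \<Rightarrow> nat) \<Rightarrow> bool) \<Rightarrow> 'a set \<Rightarrow> 'a set set \<Rightarrow> ('a \<Rightarrow> nat) \<Rightarrow> bool" where
  "class_coloring Cls V E c \<longleftrightarrow> is_coloring V c \<and> Cls V E c"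

definition refinement :: "'a set \<Rightarrow> ('a \<Rightarrow> nat) \<Rightarrow> ('a \<Rightarrow> nat) \<Rightarrow> bool" where
  "refinement V c' c \<longleftrightarrow> (\<forall>x\<in>V. \<forall>y\<in>V. c x \<noteq> c y \<longrightarrow> c' x \<noteq> c' y)"

definition refinement_property ::
  "('a set \<Rightarrow> 'a set set \<Rightarrow> ('a \<Rightarrow> nat) \<Rightarrow> bool) \<Rightarrow> bool" where
  "refinement_property Cls \<longleftrightarrow>
     (\<forall>V E c c'. hypergraph V E \<and> class_coloring Cls V E c \<and> is_coloring V c'
        \<and> refinement V c' c \<longrightarrow> class_coloring Cls V E c')"

definition chi_class ::
  "('a set \<Rightarrow> 'a set set \<Rightarrow> ('a \<Rightarrow> nat) \<Rightarrow> bool) \<Rightarrow> 'a set \<Rightarrow> 'a set set \<Rightarrow> nat" where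
  "chi_class Cls V E = (LEAST k. \<exists>c. class_coloring Cls V E c \<and> card (c ` V) = k)"

definition ch_class ::
  "('a set \<Rightarrow> 'a set set \<Rightarrow> ('a \<Rightarrow> nat) \<Rightarrow> bool) \<Rightarrow> 'a set \<Rightarrow> 'a set set \<Rightarrow> nat" where
  "ch_class Cls V E = (LEAST k. \<forall>L :: 'a \<Rightarrow> nat set.
      (\<forall>v\<in>V. 0 \<notin> L v \<and> (infinite (L v) \<or> k \<le> card (L v))) \<longrightarrow>
      (\<exists>c. class_coloring Cls V E c \<and> (\<forall>v\<in>V. c v \<in> L v)))"

end

theory Submission
  imports Defs "HOL-Library.FuncSet"
begin

lemma key_ineq:
  fixes k t n :: nat
  assumes k: "k \<ge> 1" and n: "n \<ge> 1" and t: "real t > real k * ln (real n)"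
  shows "n * (k - 1) ^ t < k ^ t"
proof -
  have kpos: "real k > 0" using k by simp
  have "(real k - 1) / real k = 1 + (- 1 / real k)" using kpos by (simp add: field_simps)
  also have "\<dots> \<le> exp (- 1 / real k)" by (rule exp_ge_add_one_self)
  finally have a: "(real k - 1) / real k \<le> exp (- 1 / real k)" .
  have a0: "0 \<le> (real k - 1) / real k" using k by simp
  have "((real k - 1) / real k) ^ t \<le> exp (- 1 / real k) ^ t"
    by (rule power_mono[OF a a0])
  also have "\<dots> = exp (real t * (- 1 / real k))" by (rule exp_of_nat_mult[symmetric])
  also have "\<dots> < exp (- ln (real n))"
  proof -
    have "real t / real k > ln (real n)" using t kpos by (simp add: field_simps)
    thus ?thesis by simp
  qed
  also have "\<dots> = 1 / real n" using n by (simp add: exp_minus inverse_eq_divide)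
  finally have b: "((real k - 1) / real k) ^ t < 1 / real n" .
  have "real n * ((real k - 1) / real k) ^ t < 1" using b n
    by (simp add: field_simps)
  hence "real n * (real k - 1) ^ t < real k ^ t" using kpos
    by (simp add: power_divide field_simps)
  hence "real (n * (k - 1) ^ t) < real (k ^ t)" using k by (simp add: of_nat_diff)
  thus ?thesis by linarith
qed

theorem theorem6p2:
  fixes Cls :: "'a set \<Rightarrow> 'a set set \<Rightarrow> ('a \<Rightarrow> nat) \<Rightarrow> bool"
    and V :: "'a set" and E :: "'a set set" and n :: nat
  assumes "refinement_property Cls"
    and "hypergraph V E" and "finite V" and "card V = n" and "n \<ge> 1"
    and "\<exists>c. class_coloring Cls V E c"
  shows "real (ch_class Cls V E) \<le> real (chi_class Cls V E) * ln (real n) + 1"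
proof -
  define k where "k = chi_class Cls V E"
  have "\<exists>c. class_coloring Cls V E c \<and> card (c ` V) = k"
    unfolding k_def chi_class_def
    apply (rule LeastI_ex[where P="\<lambda>k. \<exists>c. class_coloring Cls V E c \<and> card (c ` V) = k"])
    using assms(6) by blast
  then obtain c0 where c0: "class_coloring Cls V E c0" and ck: "card (c0 ` V) = k" by blast
  define S where "S = c0 ` V"
  have Vne: "V \<noteq> {}" using assms(4,5) by auto
  have finS: "finite S" using assms(3) S_def by simp
  have k1: "k \<ge> 1" proof -
    have "S \<noteq> {}" using Vne S_def by simp
    hence "card S > 0" using finS by (simp add: card_gt_0_iff)
    thus ?thesis using ck S_def by simp
  qed
  have lnn: "ln (real n) \<ge> 0" using assms(5) by simp
  define t where "t = nat (floor (real k * ln (real n))) + 1"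
  have tgt: "real t > real k * ln (real n)"
    unfolding t_def using lnn by (simp add: of_nat_nat) linarith
  have tle: "real t \<le> real k * ln (real n) + 1"
    unfolding t_def using lnn by (simp add: of_nat_nat)
  have t1: "t \<ge> 1" unfolding t_def by simp
  have P: "\<forall>L :: 'a \<Rightarrow> nat set.
      (\<forall>v\<in>V. 0 \<notin> L v \<and> (infinite (L v) \<or> t \<le> card (L v))) \<longrightarrow>
      (\<exists>c. class_coloring Cls V E c \<and> (\<forall>v\<in>V. c v \<in> L v))"
  proof (intro allI impI)
    fix L :: "'a \<Rightarrow> nat set"
    assume L: "\<forall>v\<in>V. 0 \<notin> L v \<and> (infinite (L v) \<or> t \<le> card (L v))"
    have "\<forall>v\<in>V. \<exists>B. B \<subseteq> L v \<and> finite B \<and> card B = t"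
    proof
      fix v assume "v \<in> V"
      with L have "infinite (L v) \<or> t \<le> card (L v)" by blast
      thus "\<exists>B. B \<subseteq> L v \<and> finite B \<and> card B = t"
      proof
        assume "infinite (L v)"
        then obtain B where "B \<subseteq> L v" "finite B" "card B = t"
          using infinite_arbitrarily_large by blast
        thus ?thesis by blast
      next
        assume h: "t \<le> card (L v)"
        then obtain B where "B \<subseteq> L v" "card B = t"
          using obtain_subset_with_card_n by blast
        moreover have "finite B" using \<open>card B = t\<close> t1 card.infinite by fastforce
        ultimately show ?thesis by blast
      qed
    qed
    then obtain L' where L': "\<And>v. v \<in> V \<Longrightarrow> L' v \<subseteq> L v \<and> finite (L' v) \<and> card (L' v) = t"
      by metis
    define U where "U = (\<Union>v\<in>V. L' v)"
    have finU: "finite U" unfolding U_def using assms(3) L' by auto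
    have LU: "\<And>v. v \<in> V \<Longrightarrow> L' v \<subseteq> U" unfolding U_def by blast
    obtain v0 where "v0 \<in> V" using Vne by blast
    have tU: "t \<le> card U" using L'[OF \<open>v0 \<in> V\<close>] card_mono[OF finU LU[OF \<open>v0 \<in> V\<close>]] by simp
    define F where "F = PiE U (\<lambda>_. S)"
    define bad where "bad v = PiE U (\<lambda>x. if x \<in> L' v then S - {c0 v} else S)" for v
    have cF: "card F = k ^ card U" unfolding F_def using ck S_def by (simp add: card_PiE finU)
    have cbad: "card (bad v) = (k - 1) ^ t * k ^ (card U - t)" if v: "v \<in> V" for v
    proof -
      have c0S: "c0 v \<in> S" using v S_def by simp
      have "card (bad v) = (\<Prod>x\<in>U. card (if x \<in> L' v then S - {c0 v} else S))"
        unfolding bad_def by (simp add: card_PiE finU)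
      also have "\<dots> = (\<Prod>x\<in>U. if x \<in> L' v then k - 1 else k)"
        using c0S finS ck S_def by (intro prod.cong) auto
      also have "\<dots> = (\<Prod>x\<in>U \<inter> {x. x \<in> L' v}. k - 1) * (\<Prod>x\<in>U \<inter> - {x. x \<in> L' v}. k)"
        by (rule prod.If_cases[OF finU])
      also have "U \<inter> {x. x \<in> L' v} = L' v" using LU[OF v] by blast
      also have "U \<inter> - {x. x \<in> L' v} = U - L' v" by blast
      finally show ?thesis using L'[OF v] LU[OF v] by (simp add: card_Diff_subset)
    qed
    have "card (\<Union>v\<in>V. bad v) \<le> (\<Sum>v\<in>V. card (bad v))" by (rule card_UN_le[OF assms(3)])
    also have "\<dots> = n * ((k - 1) ^ t * k ^ (card U - t))" using cbad assms(4) by simp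
    also have "\<dots> = (n * (k - 1) ^ t) * k ^ (card U - t)" by simp
    also have "\<dots> < k ^ t * k ^ (card U - t)"
      using key_ineq[OF k1 assms(5) tgt] k1 by simp
    also have "\<dots> = k ^ card U" using tU by (simp add: power_add[symmetric])
    finally have lt: "card (\<Union>v\<in>V. bad v) < card F" using cF by simp
    have "\<not> F \<subseteq> (\<Union>v\<in>V. bad v)"
    proof
      assume "F \<subseteq> (\<Union>v\<in>V. bad v)"
      moreover have "finite (\<Union>v\<in>V. bad v)"
        unfolding bad_def using assms(3) finU finS by (auto intro!: finite_PiE)
      ultimately have "card F \<le> card (\<Union>v\<in>V. bad v)" by (rule card_mono[rotated])
      thus False using lt by simp
    qed
    then obtain f where fF: "f \<in> F" and fb: "\<And>v. v \<in> V \<Longrightarrow> f \<notin> bad v" by blast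
    have ex: "\<exists>x\<in>L' v. f x = c0 v" if v: "v \<in> V" for v
    proof (rule ccontr)
      assume "\<not> ?thesis"
      hence "f \<in> bad v" using fF LU[OF v] unfolding F_def bad_def by (auto simp: PiE_iff)
      thus False using fb[OF v] by blast
    qed
    define c' where "c' v = (SOME x. x \<in> L' v \<and> f x = c0 v)" for v
    have c'p: "c' v \<in> L' v \<and> f (c' v) = c0 v" if "v \<in> V" for v
      unfolding c'_def using ex[OF that] by (rule someI2_bex) blast
    have cL: "\<forall>v\<in>V. c' v \<in> L v" using c'p L' by blast
    have isc: "is_coloring V c'" unfolding is_coloring_def
      using cL L by (metis gr0I)
    have ref: "refinement V c' c0" unfolding refinement_def using c'p by metis
    have "class_coloring Cls V E c'"
      using assms(1,2) c0 isc ref unfolding refinement_property_def by blast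
    thus "\<exists>c. class_coloring Cls V E c \<and> (\<forall>v\<in>V. c v \<in> L v)" using cL by blast
  qed
  have "ch_class Cls V E \<le> t" unfolding ch_class_def by (rule Least_le) (rule P)
  hence "real (ch_class Cls V E) \<le> real t" by simp
  thus ?thesis using tle k_def by simp
qed

end
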